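(* Let $e$ be a hyperimaginary (in the monster model $\mathfrak{C}$ of a complete theory $T$). The following are equivalent: (1) $e$ is normal, i.e. $\mathrm{Fix}(e)$ is a normal subgroup of $\mathrm{Aut}(\mathfrak{C})$; (2) for every hyperimaginary $e'$ with $e'\equiv e$ (i.e. $e'=g(e)$ for some $g\in\mathrm{Aut}(\mathfrak{C})$), $e'\in\mathrm{dcl}(e)$; (3) $e\sim (f(e): f\in \mathrm{Aut}(\mathfrak{C}))$; (4) $e$ is equivalent ($\sim$) to a sequence enumerating the orbit $\{g(d):g\in\mathrm{Aut}(\mathfrak{C})\}$ of some hyperimaginary $d$.
   Context: $\mathfrak{C}$ is a monster model (large saturated, strongly homogeneous model) of a complete first-order theory $T$; "small" means of cardinality smaller than that of $\mathfrak{C}$. A hyperimaginary is an equivalence class $e=a_E$ of a possibly infinite small tuple $a$ of elements of $\mathfrak{C}$ under an equivalence relation $E$ that is type-definable without parameters ($0$-type-definable). Automorphisms of $\mathfrak{C}$ act on hyperimaginaries by $f(a_E)=f(a)_E$; a (small) sequence of hyperimaginaries is treated as a single hyperimaginary, fixed by $f$ iff each entry is fixed. $\mathrm{Fix}(e)=\mathrm{Aut}(\mathfrak{C}/e)=\{f\in\mathrm{Aut}(\mathfrak{C}): f(e)=e\}$. A hyperimaginary $d$ is definable over $e$ if $f(d)=d$ for all $f\in\mathrm{Fix}(e)$; $\mathrm{dcl}(e)$ is the class of hyperimaginaries definable over $e$. Two hyperimaginaries $e,d$ are equivalent, $e\sim d$, if $\mathrm{dcl}(e)=\mathrm{dcl}(d)$.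 *)

theory Defs
  imports "HOL-Algebra.Group" "HOL-Algebra.Coset"
begin

text \<open>A first-order structure on the universe of type 'a, given by its relations
  (function symbols and constants are encoded by their graphs).
  rel R xs: the tuple xs satisfies the relation symbol R.\<close>

definition Aut :: "('r \<Rightarrow> 'a list \<Rightarrow> bool) \<Rightarrow> ('a \<Rightarrow> 'a) set" where
  "Aut rel = {f. bij f \<and> (\<forall>R xs. rel R (map f xs) = rel R xs)}"

definition AutGrp :: "('r \<Rightarrow> 'a list \<Rightarrow> bool) \<Rightarrow> ('a \<Rightarrow> 'a) monoid" where
  "AutGrp rel = \<lparr>carrier = Aut rel, mult = (\<circ>), one = id\<rparr>"

text \<open>A hyperimaginary of sort 'i is represented by a pair (a, E): a tuple
  a indexed by 'i and an equivalence relation E on such tuples; it stands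
  for the class of a modulo E.\<close>

type_synonym ('i, 'a) hyperim = "('i \<Rightarrow> 'a) \<times> (('i \<Rightarrow> 'a) \<Rightarrow> ('i \<Rightarrow> 'a) \<Rightarrow> bool)"

text \<open>0-type-definability is approximated by automorphism invariance
  (every 0-type-definable relation is invariant).\<close>

definition is_hyperim :: "('r \<Rightarrow> 'a list \<Rightarrow> bool) \<Rightarrow> ('i, 'a) hyperim \<Rightarrow> bool" where
  "is_hyperim rel e \<longleftrightarrow> equivp (snd e) \<and>
     (\<forall>f\<in>Aut rel. \<forall>x y. snd e (f \<circ> x) (f \<circ> y) = snd e x y)"

definition heq :: "('i, 'a) hyperim \<Rightarrow> ('i, 'a) hyperim \<Rightarrow> bool" where
  "heq e d \<longleftrightarrow> snd e = snd d \<and> snd e (fst e) (fst d)"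

definition hact :: "('a \<Rightarrow> 'a) \<Rightarrow> ('i, 'a) hyperim \<Rightarrow> ('i, 'a) hyperim" where
  "hact f e = (f \<circ> fst e, snd e)"

definition Fix :: "('r \<Rightarrow> 'a list \<Rightarrow> bool) \<Rightarrow> ('i, 'a) hyperim \<Rightarrow> ('a \<Rightarrow> 'a) set" where
  "Fix rel e = {f \<in> Aut rel. heq (hact f e) e}"

definition definable_over ::
  "('r \<Rightarrow> 'a list \<Rightarrow> bool) \<Rightarrow> ('j, 'a) hyperim \<Rightarrow> ('i, 'a) hyperim \<Rightarrow> bool" where
  "definable_over rel d e \<longleftrightarrow> (\<forall>f\<in>Fix rel e. heq (hact f d) d)"

text \<open>Equivalence e ~ d, i.e. dcl(e) = dcl(d); since HOL cannot quantify over all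
  sorts, it is rendered as mutual membership e \<in> dcl(d), d \<in> dcl(e)
  (equivalent, as dcl is reflexive and transitive).\<close>
definition hequiv ::
  "('r \<Rightarrow> 'a list \<Rightarrow> bool) \<Rightarrow> ('i, 'a) hyperim \<Rightarrow> ('j, 'a) hyperim \<Rightarrow> bool" where
  "hequiv rel e d \<longleftrightarrow> definable_over rel e d \<and> definable_over rel d e"

definition hseq :: "'j set \<Rightarrow> ('j \<Rightarrow> ('i, 'a) hyperim) \<Rightarrow> ('j \<times> 'i, 'a) hyperim" where
  "hseq J h = ((\<lambda>(j, i). if j \<in> J then fst (h j) i else undefined),
               (\<lambda>x y. \<forall>j\<in>J. snd (h j) (\<lambda>i. x (j, i)) (\<lambda>i. y (j, i))))"

definition orbit_seq :: "('r \<Rightarrow> 'a list \<Rightarrow> bool) \<Rightarrow> ('i, 'a) hyperim \<Rightarrow> (('a \<Rightarrow> 'a) \<times> 'i, 'a) hyperim" where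
  "orbit_seq rel e = hseq (Aut rel) (\<lambda>f. hact f e)"

definition normal_hyperim :: "('r \<Rightarrow> 'a list \<Rightarrow> bool) \<Rightarrow> ('i, 'a) hyperim \<Rightarrow> bool" where
  "normal_hyperim rel e \<longleftrightarrow> Fix rel e \<lhd> AutGrp rel"

end

theory Submission
  imports Defs
begin

abbreviation iv :: "('a \<Rightarrow> 'a) \<Rightarrow> 'a \<Rightarrow> 'a" where "iv f \<equiv> inv_into UNIV f"

lemma aut_comp: "f \<in> Aut rel \<Longrightarrow> g \<in> Aut rel \<Longrightarrow> f \<circ> g \<in> Aut rel"
  by (auto simp: Aut_def bij_comp simp flip: map_map)

lemma aut_id: "id \<in> Aut rel"
  by (simp add: Aut_def)

lemma aut_inv: assumes "f \<in> Aut rel" shows "iv f \<in> Aut rel"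
proof -
  have b: "bij f" and r: "\<And>R xs. rel R (map f xs) = rel R xs" using assms by (auto simp: Aut_def)
  have "rel R (map (iv f) xs) = rel R xs" for R xs
  proof -
    have "rel R (map (iv f) xs) = rel R (map f (map (iv f) xs))" by (rule r[symmetric])
    also have "map f (map (iv f) xs) = xs" using b by (simp add: bij_is_surj surj_f_inv_f map_idI)
    finally show ?thesis .
  qed
  then show ?thesis using b bij_imp_bij_inv by (auto simp: Aut_def)
qed

lemma aut_inv_l: "f \<in> Aut rel \<Longrightarrow> iv f \<circ> f = id"
  by (auto simp: Aut_def bij_is_inj fun_eq_iff)

lemma aut_inv_r: "f \<in> Aut rel \<Longrightarrow> f \<circ> iv f = id"
  by (auto simp: Aut_def bij_is_surj surj_f_inv_f fun_eq_iff)

lemma aut_group: "group (AutGrp rel)"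
proof (rule groupI)
  fix x assume "x \<in> carrier (AutGrp rel)"
  then show "\<exists>y\<in>carrier (AutGrp rel). y \<otimes>\<^bsub>AutGrp rel\<^esub> x = \<one>\<^bsub>AutGrp rel\<^esub>"
    by (intro bexI[of _ "iv x"]) (auto simp: AutGrp_def aut_inv aut_inv_l)
qed (auto simp: AutGrp_def aut_comp aut_id comp_assoc)

lemma aut_m_inv: "f \<in> Aut rel \<Longrightarrow> inv\<^bsub>AutGrp rel\<^esub> f = iv f"
  using group.inv_equality[OF aut_group[of rel], of "iv f" f]
  by (simp add: AutGrp_def aut_inv aut_inv_l)

lemma aut_m_inv2: "f \<in> Aut rel \<Longrightarrow> m_inv \<lparr>carrier = Aut rel, mult = (\<circ>), one = id\<rparr> f = iv f"
  using aut_m_inv[of f rel] by (simp add: AutGrp_def)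

lemma iv_iv: "f \<in> Aut rel \<Longrightarrow> iv (iv f) = f"
  by (auto simp: Aut_def inv_inv_eq)

lemma aut_inv_r': "f \<in> Aut rel \<Longrightarrow> f \<circ> (iv f \<circ> h) = h"
  by (simp add: aut_inv_r flip: comp_assoc)

lemma aut_inv_l': "f \<in> Aut rel \<Longrightarrow> iv f \<circ> (f \<circ> h) = h"
  by (simp add: aut_inv_l flip: comp_assoc)

lemma Fix_iff: "f \<in> Fix rel d \<longleftrightarrow> f \<in> Aut rel \<and> snd d (f \<circ> fst d) (fst d)"
  by (simp add: Fix_def heq_def hact_def)

lemma hyp_inv: "is_hyperim rel d \<Longrightarrow> f \<in> Aut rel \<Longrightarrow> snd d (f \<circ> x) (f \<circ> y) = snd d x y"
  by (simp add: is_hyperim_def)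

lemma hyp_refl: "is_hyperim rel d \<Longrightarrow> snd d x x"
  by (simp add: is_hyperim_def equivp_reflp)

lemma hyp_sym: "is_hyperim rel d \<Longrightarrow> snd d x y \<Longrightarrow> snd d y x"
  unfolding is_hyperim_def by (elim conjE) (erule equivp_symp)

lemma hyp_trans: "is_hyperim rel d \<Longrightarrow> snd d x y \<Longrightarrow> snd d y z \<Longrightarrow> snd d x z"
  unfolding is_hyperim_def by (elim conjE) (erule equivp_transp)

lemma fix_subgroup: assumes h: "is_hyperim rel d" shows "subgroup (Fix rel d) (AutGrp rel)"
proof
  show "Fix rel d \<subseteq> carrier (AutGrp rel)" by (auto simp: Fix_iff AutGrp_def)
  show "\<one>\<^bsub>AutGrp rel\<^esub> \<in> Fix rel d" using h by (simp add: Fix_iff AutGrp_def aut_id hyp_refl)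
next
  fix x y assume x: "x \<in> Fix rel d" and y: "y \<in> Fix rel d"
  have "snd d (x \<circ> (y \<circ> fst d)) (x \<circ> fst d)" using x y h by (simp add: Fix_iff hyp_inv)
  moreover have "snd d (x \<circ> fst d) (fst d)" using x by (simp add: Fix_iff)
  ultimately have "snd d (x \<circ> (y \<circ> fst d)) (fst d)" by (rule hyp_trans[OF h])
  then show "x \<otimes>\<^bsub>AutGrp rel\<^esub> y \<in> Fix rel d" using x y
    by (simp add: Fix_iff AutGrp_def aut_comp comp_assoc)
next
  fix x assume x: "x \<in> Fix rel d"
  then have xa: "x \<in> Aut rel" by (simp add: Fix_iff)
  have "snd d (iv x \<circ> (x \<circ> fst d)) (iv x \<circ> fst d)" using x h aut_inv[OF xa] by (simp add: Fix_iff hyp_inv)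
  then have "snd d (fst d) (iv x \<circ> fst d)" by (simp only: aut_inv_l'[OF xa])
  then have "snd d (iv x \<circ> fst d) (fst d)" by (rule hyp_sym[OF h])
  then show "inv\<^bsub>AutGrp rel\<^esub> x \<in> Fix rel d" using xa
    by (simp add: Fix_iff aut_m_inv aut_inv)
qed

lemma normal_conj:
  assumes h: "is_hyperim rel d"
  shows "normal_hyperim rel d \<longleftrightarrow>
    (\<forall>g\<in>Aut rel. \<forall>f\<in>Fix rel d. snd d (f \<circ> (g \<circ> fst d)) (g \<circ> fst d))"
proof -
  interpret G: group "AutGrp rel" by (rule aut_group)
  have "normal_hyperim rel d \<longleftrightarrow> (\<forall>x\<in>Aut rel. \<forall>f\<in>Fix rel d. x \<circ> f \<circ> iv x \<in> Fix rel d)"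
    unfolding normal_hyperim_def G.normal_inv_iff using fix_subgroup[OF h]
    by (simp add: AutGrp_def aut_m_inv2 cong: ball_cong)
  also have "\<dots> \<longleftrightarrow> (\<forall>g\<in>Aut rel. \<forall>f\<in>Fix rel d. snd d (f \<circ> (g \<circ> fst d)) (g \<circ> fst d))"
  proof (intro iffI ballI)
    fix g f assume A: "\<forall>x\<in>Aut rel. \<forall>f\<in>Fix rel d. x \<circ> f \<circ> iv x \<in> Fix rel d"
      and g: "g \<in> Aut rel" and f: "f \<in> Fix rel d"
    have "iv g \<circ> f \<circ> iv (iv g) \<in> Fix rel d" using A aut_inv[OF g] f by blast
    then have "snd d (iv g \<circ> (f \<circ> (g \<circ> fst d))) (fst d)" using iv_iv[OF g] by (simp add: Fix_iff comp_assoc)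
    then have "snd d (g \<circ> (iv g \<circ> (f \<circ> (g \<circ> fst d)))) (g \<circ> fst d)" using h g by (simp add: hyp_inv)
    then show "snd d (f \<circ> (g \<circ> fst d)) (g \<circ> fst d)" by (simp only: aut_inv_r'[OF g])
  next
    fix x f assume A: "\<forall>g\<in>Aut rel. \<forall>f\<in>Fix rel d. snd d (f \<circ> (g \<circ> fst d)) (g \<circ> fst d)"
      and x: "x \<in> Aut rel" and f: "f \<in> Fix rel d"
    have "snd d (f \<circ> (iv x \<circ> fst d)) (iv x \<circ> fst d)" using A aut_inv[OF x] f by blast
    then have "snd d (x \<circ> (f \<circ> (iv x \<circ> fst d))) (x \<circ> (iv x \<circ> fst d))" using h x by (simp add: hyp_inv)
    then have "snd d (x \<circ> (f \<circ> (iv x \<circ> fst d))) (fst d)" by (simp only: aut_inv_r'[OF x])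
    then show "x \<circ> f \<circ> iv x \<in> Fix rel d" using x f aut_inv[OF x]
      by (simp add: Fix_iff aut_comp comp_assoc)
  qed
  finally show ?thesis .
qed

lemma hyp_inv': "is_hyperim rel d \<Longrightarrow> f \<in> Aut rel \<Longrightarrow> snd d (\<lambda>i. f (x i)) (\<lambda>i. f (y i)) = snd d x y"
  using hyp_inv[of rel d f x y] by (simp add: comp_def)

lemma def_iff: "definable_over rel X d \<longleftrightarrow> Fix rel d \<subseteq> Fix rel X"
  unfolding definable_over_def Fix_def by auto

lemma hequiv_iff: "hequiv rel e d \<longleftrightarrow> Fix rel e = Fix rel d"
  unfolding hequiv_def def_iff by auto

lemma Fix_orbit: "f \<in> Fix rel (orbit_seq rel d) \<longleftrightarrow>
   f \<in> Aut rel \<and> (\<forall>j\<in>Aut rel. snd d (f \<circ> (j \<circ> fst d)) (j \<circ> fst d))"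
  unfolding Fix_iff orbit_seq_def hseq_def hact_def by (simp add: comp_def cong: ball_cong)

lemma orbit_hyp: assumes h: "is_hyperim rel d" shows "is_hyperim rel (orbit_seq rel d)"
  unfolding is_hyperim_def orbit_seq_def hseq_def hact_def snd_conv fst_conv
  apply (intro conjI ballI allI equivpI reflpI sympI transpI)
  apply (simp add: hyp_refl[OF h])
    apply (metis hyp_sym[OF h])
   apply (metis hyp_trans[OF h])
  apply (rule ball_cong[OF refl])
  apply (simp only: comp_apply)
  apply (rule hyp_inv'[OF h])
  apply assumption
  done

lemma orbit_normal: assumes h: "is_hyperim rel d" shows "Fix rel (orbit_seq rel d) \<lhd> AutGrp rel"
proof -
  interpret G: group "AutGrp rel" by (rule aut_group)
  show ?thesis unfolding G.normal_inv_iff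
  proof (intro conjI ballI)
    show "subgroup (Fix rel (orbit_seq rel d)) (AutGrp rel)" by (rule fix_subgroup[OF orbit_hyp[OF h]])
  next
    fix x f assume x: "x \<in> carrier (AutGrp rel)" and f: "f \<in> Fix rel (orbit_seq rel d)"
    have xa: "x \<in> Aut rel" using x by (simp add: AutGrp_def)
    have "\<forall>j\<in>Aut rel. snd d ((x \<circ> f \<circ> iv x) \<circ> (j \<circ> fst d)) (j \<circ> fst d)"
    proof
      fix j assume j: "j \<in> Aut rel"
      have "snd d (f \<circ> ((iv x \<circ> j) \<circ> fst d)) ((iv x \<circ> j) \<circ> fst d)"
        using f aut_comp[OF aut_inv[OF xa] j] by (simp add: Fix_orbit)
      then have "snd d (x \<circ> (f \<circ> ((iv x \<circ> j) \<circ> fst d))) (x \<circ> ((iv x \<circ> j) \<circ> fst d))"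
        using hyp_inv[OF h xa] by simp
      then have "snd d (x \<circ> (f \<circ> (iv x \<circ> (j \<circ> fst d)))) (x \<circ> (iv x \<circ> (j \<circ> fst d)))"
        by (simp only: comp_assoc)
      then show "snd d ((x \<circ> f \<circ> iv x) \<circ> (j \<circ> fst d)) (j \<circ> fst d)"
        by (simp only: aut_inv_r'[OF xa] comp_assoc)
    qed
    moreover have "x \<circ> f \<circ> iv x \<in> Aut rel" using xa f aut_inv[OF xa] by (simp add: Fix_orbit aut_comp)
    ultimately show "x \<otimes>\<^bsub>AutGrp rel\<^esub> f \<otimes>\<^bsub>AutGrp rel\<^esub> inv\<^bsub>AutGrp rel\<^esub> x \<in> Fix rel (orbit_seq rel d)"
      using xa by (simp add: aut_m_inv Fix_orbit) (simp add: AutGrp_def)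
  qed
qed

lemma part4: assumes "is_hyperim rel d" "hequiv rel e (orbit_seq rel d)" shows "normal_hyperim rel e"
  using assms orbit_normal unfolding normal_hyperim_def hequiv_iff by metis

lemma part2: assumes h: "is_hyperim rel e"
  shows "normal_hyperim rel e \<longleftrightarrow> hequiv rel e (orbit_seq rel e)"
proof -
  have sub: "Fix rel (orbit_seq rel e) \<subseteq> Fix rel e"
  proof
    fix f assume "f \<in> Fix rel (orbit_seq rel e)"
    then have fa: "f \<in> Aut rel" and all: "\<forall>j\<in>Aut rel. snd e (f \<circ> (j \<circ> fst e)) (j \<circ> fst e)"
      by (auto simp: Fix_orbit)
    from bspec[OF all aut_id] have "snd e (f \<circ> fst e) (fst e)" by simp
    then show "f \<in> Fix rel e" using fa by (simp add: Fix_iff)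
  qed
  have "hequiv rel e (orbit_seq rel e) \<longleftrightarrow> Fix rel e \<subseteq> Fix rel (orbit_seq rel e)"
    using sub by (auto simp: hequiv_iff)
  also have "\<dots> \<longleftrightarrow> (\<forall>g\<in>Aut rel. \<forall>f\<in>Fix rel e. snd e (f \<circ> (g \<circ> fst e)) (g \<circ> fst e))"
  proof
    assume A: "Fix rel e \<subseteq> Fix rel (orbit_seq rel e)"
    show "\<forall>g\<in>Aut rel. \<forall>f\<in>Fix rel e. snd e (f \<circ> (g \<circ> fst e)) (g \<circ> fst e)"
    proof (intro ballI)
      fix g f assume g: "g \<in> Aut rel" and f: "f \<in> Fix rel e"
      then have "f \<in> Fix rel (orbit_seq rel e)" using A by blast
      then have "\<forall>j\<in>Aut rel. snd e (f \<circ> (j \<circ> fst e)) (j \<circ> fst e)" unfolding Fix_orbit by (rule conjunct2)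
      then show "snd e (f \<circ> (g \<circ> fst e)) (g \<circ> fst e)" using g by (rule bspec)
    qed
  next
    assume A: "\<forall>g\<in>Aut rel. \<forall>f\<in>Fix rel e. snd e (f \<circ> (g \<circ> fst e)) (g \<circ> fst e)"
    show "Fix rel e \<subseteq> Fix rel (orbit_seq rel e)"
    proof
      fix f assume f: "f \<in> Fix rel e"
      then have "f \<in> Aut rel" by (simp add: Fix_iff)
      moreover have "\<forall>j\<in>Aut rel. snd e (f \<circ> (j \<circ> fst e)) (j \<circ> fst e)" using A f by blast
      ultimately show "f \<in> Fix rel (orbit_seq rel e)" by (simp only: Fix_orbit simp_thms)
    qed
  qed
  finally show ?thesis using normal_conj[OF h] by simp
qed

lemma part1: assumes h: "is_hyperim rel e"
  shows "normal_hyperim rel e \<longleftrightarrow>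
            (\<forall>e'. is_hyperim rel e' \<and> (\<exists>g\<in>Aut rel. heq e' (hact g e)) \<longrightarrow> definable_over rel e' e)"
  unfolding normal_conj[OF h]
proof (intro iffI allI impI ballI)
  fix e' assume A: "\<forall>g\<in>Aut rel. \<forall>f\<in>Fix rel e. snd e (f \<circ> (g \<circ> fst e)) (g \<circ> fst e)"
    and B: "is_hyperim rel e' \<and> (\<exists>g\<in>Aut rel. heq e' (hact g e))"
  then obtain g where g: "g \<in> Aut rel" and he: "heq e' (hact g e)" by blast
  have s: "snd e' = snd e" and r: "snd e (fst e') (g \<circ> fst e)" using he by (auto simp: heq_def hact_def)
  show "definable_over rel e' e" unfolding definable_over_def
  proof
    fix f assume f: "f \<in> Fix rel e"
    have fa: "f \<in> Aut rel" using f by (simp add: Fix_iff)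
    have 1: "snd e (f \<circ> fst e') (f \<circ> (g \<circ> fst e))" using r hyp_inv[OF h fa] by simp
    have 2: "snd e (f \<circ> (g \<circ> fst e)) (g \<circ> fst e)" using A g f by blast
    have 3: "snd e (g \<circ> fst e) (fst e')" using r hyp_sym[OF h] by blast
    have "snd e (f \<circ> fst e') (fst e')" using hyp_trans[OF h 1 hyp_trans[OF h 2 3]] .
    then show "heq (hact f e') e'" using s by (simp add: heq_def hact_def)
  qed
next
  fix g f assume A: "\<forall>e'. is_hyperim rel e' \<and> (\<exists>g\<in>Aut rel. heq e' (hact g e)) \<longrightarrow> definable_over rel e' e"
    and g: "g \<in> Aut rel" and f: "f \<in> Fix rel e"
  have "is_hyperim rel (hact g e)" using h by (simp add: is_hyperim_def hact_def)
  moreover have "heq (hact g e) (hact g e)" using hyp_refl[OF h] by (simp add: heq_def hact_def)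
  ultimately have "definable_over rel (hact g e) e" using A g by blast
  then have "heq (hact f (hact g e)) (hact g e)" using f by (simp add: definable_over_def)
  then show "snd e (f \<circ> (g \<circ> fst e)) (g \<circ> fst e)" by (simp add: heq_def hact_def)
qed

theorem mainTheorem1:
  fixes rel :: "'r \<Rightarrow> 'a list \<Rightarrow> bool"
    and e :: "('i, 'a) hyperim"
  assumes "is_hyperim rel e"
  shows "(normal_hyperim rel e \<longleftrightarrow>
            (\<forall>e'. is_hyperim rel e' \<and> (\<exists>g\<in>Aut rel. heq e' (hact g e)) \<longrightarrow> definable_over rel e' e))
       \<and> (normal_hyperim rel e \<longleftrightarrow> hequiv rel e (orbit_seq rel e))
       \<and> (normal_hyperim rel e \<longleftrightarrow>
            (\<exists>d :: ('i, 'a) hyperim. is_hyperim rel d \<and> hequiv rel e (orbit_seq rel d)))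
       \<and> (\<forall>d :: ('k, 'a) hyperim. is_hyperim rel d \<and> hequiv rel e (orbit_seq rel d)
            \<longrightarrow> normal_hyperim rel e)"
proof (intro conjI)
  show "normal_hyperim rel e \<longleftrightarrow>
            (\<forall>e'. is_hyperim rel e' \<and> (\<exists>g\<in>Aut rel. heq e' (hact g e)) \<longrightarrow> definable_over rel e' e)"
    by (rule part1[OF assms])
  show P2: "normal_hyperim rel e \<longleftrightarrow> hequiv rel e (orbit_seq rel e)" by (rule part2[OF assms])
  show "normal_hyperim rel e \<longleftrightarrow>
            (\<exists>d :: ('i, 'a) hyperim. is_hyperim rel d \<and> hequiv rel e (orbit_seq rel d))"
  proof
    assume "normal_hyperim rel e"
    then show "\<exists>d :: ('i, 'a) hyperim. is_hyperim rel d \<and> hequiv rel e (orbit_seq rel d)"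
      using P2 assms by (intro exI[of _ e]) simp
  next
    assume "\<exists>d :: ('i, 'a) hyperim. is_hyperim rel d \<and> hequiv rel e (orbit_seq rel d)"
    then obtain d :: "('i, 'a) hyperim" where "is_hyperim rel d" "hequiv rel e (orbit_seq rel d)" by blast
    then show "normal_hyperim rel e" by (rule part4)
  qed
  show "\<forall>d :: ('k, 'a) hyperim. is_hyperim rel d \<and> hequiv rel e (orbit_seq rel d)
            \<longrightarrow> normal_hyperim rel e"
  proof (intro allI impI)
    fix d :: "('k, 'a) hyperim"
    assume "is_hyperim rel d \<and> hequiv rel e (orbit_seq rel d)"
    then show "normal_hyperim rel e" using part4 by blast
  qed
qed

end
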